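(* Let $r\in\{0,\ldots,N\}$ and suppose $\xi_r(\varpi^N)<1/2$. Then for all $A,A'\in\mathbb{R}^{n\times s}$, $$\|\phi(A')-\phi(A)\|_1\le \frac{1}{1-2\xi_r(\varpi^N)}\big(\delta_r(A')+\delta_r(A)\big).$$
   Context: Data: integers $n,s,N\ge1$ and a dataset $\varpi^N=((x_1,y_1),\ldots,(x_N,y_N))$ with $x_t\in\mathbb{R}^n$, $y_t\in\mathbb{R}$. Let $\mathbb{T}=\{1,\ldots,N\}$, $\mathbb{S}=\{1,\ldots,s\}$. For $A=[a_1\ \cdots\ a_s]\in\mathbb{R}^{n\times s}$, $\sigma_A:\mathbb{T}\to\mathbb{S}$ is a switching signal satisfying $\sigma_A(t)\in\arg\min_{i\in\mathbb{S}}|y_t-x_t^\top a_i|$ for all $t$, selected uniquely by a fixed rule depending only on $A$ and the data (among all admissible choices, one maximizing $\min_{i}|I_i(A)|$, ties then broken by assigning the smallest admissible index). $I_i(A)=\{t\in\mathbb{T}:\sigma_A(t)=i\}$. Define $\phi(A)=\big(y_1-x_1^\top a_{\sigma_A(1)},\ldots,y_N-x_N^\top a_{\sigma_A(N)}\big)^\top\in\mathbb{R}^N$ and $\mathcal{J}(A)=\|\phi(A)\|_1$. For $\mathcal{T}\subset\mathbb{T}$, $\phi_{\mathcal{T}}(A)$ is the subvector of $\phi(A)$ indexed by $\mathcal{T}$. $\mathcal{S}_r=\{w\in\mathbb{R}^N:\|w\|_0\le r\}$, and $\delta_r(A)=\inf_{w\in\mathcal{S}_r}\|\phi(A)-w\|_1$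 (sum of the $N-r$ smallest absolute entries of $\phi(A)$). The $r$-th concentration ratio is $$\xi_r(\varpi^N)=\sup\Big\{\frac{\|\phi_{\mathcal{T}}(A)-\phi_{\mathcal{T}}(A')\|_1}{\|\phi(A)-\phi(A')\|_1}: A,A'\in\mathbb{R}^{n\times s},\ \mathcal{T}\subset\mathbb{T},\ \phi(A)\ne\phi(A'),\ |\mathcal{T}|\le r\Big\}.$$ *)

theory Defs
  imports Complex_Main "HOL-Library.List_Lexorder"
begin

text \<open>Data: x t j (t in {1..N}, j in {1..n}) is the j-th entry of x_t; y t is y_t.
  A matrix A in R^{n x s} is represented as A :: nat => nat => real with A j i the
  j-th entry of the i-th column a_i (entries outside the index range are irrelevant).\<close>

definition ip :: "nat \<Rightarrow> (nat \<Rightarrow> nat \<Rightarrow> real) \<Rightarrow> (nat \<Rightarrow> nat \<Rightarrow> real) \<Rightarrow> nat \<Rightarrow> nat \<Rightarrow> real" where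
  "ip n x A t i = (\<Sum>j\<in>{1..n}. x t j * A j i)"

definition argminset :: "nat \<Rightarrow> nat \<Rightarrow> (nat \<Rightarrow> nat \<Rightarrow> real) \<Rightarrow> (nat \<Rightarrow> real)
    \<Rightarrow> (nat \<Rightarrow> nat \<Rightarrow> real) \<Rightarrow> nat \<Rightarrow> nat set" where
  "argminset n s x y A t = {i \<in> {1..s}. \<forall>k\<in>{1..s}.
      \<bar>y t - ip n x A t i\<bar> \<le> \<bar>y t - ip n x A t k\<bar>}"

text \<open>Admissible switching signals, encoded as lists [sigma 1, ..., sigma N].\<close>
definition admissible :: "nat \<Rightarrow> nat \<Rightarrow> nat \<Rightarrow> (nat \<Rightarrow> nat \<Rightarrow> real) \<Rightarrow> (nat \<Rightarrow> real)
    \<Rightarrow> (nat \<Rightarrow> nat \<Rightarrow> real) \<Rightarrow> nat list set" where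
  "admissible n s N x y A = {ls. length ls = N \<and>
      (\<forall>t\<in>{1..N}. ls ! (t - 1) \<in> argminset n s x y A t)}"

definition minclass :: "nat \<Rightarrow> nat \<Rightarrow> nat list \<Rightarrow> nat" where
  "minclass s N ls = Min ((\<lambda>i. card {t \<in> {1..N}. ls ! (t - 1) = i}) ` {1..s})"

text \<open>Selection rule: among admissible signals maximize min_i |I_i(A)|; ties broken
  lexicographically (smallest admissible index first).\<close>
definition sigmaList :: "nat \<Rightarrow> nat \<Rightarrow> nat \<Rightarrow> (nat \<Rightarrow> nat \<Rightarrow> real) \<Rightarrow> (nat \<Rightarrow> real)
    \<Rightarrow> (nat \<Rightarrow> nat \<Rightarrow> real) \<Rightarrow> nat list" where
  "sigmaList n s N x y A =
     (let Adm = admissible n s N x y A;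
          m = Max (minclass s N ` Adm)
      in Min {ls \<in> Adm. minclass s N ls = m})"

definition sigmaA :: "nat \<Rightarrow> nat \<Rightarrow> nat \<Rightarrow> (nat \<Rightarrow> nat \<Rightarrow> real) \<Rightarrow> (nat \<Rightarrow> real)
    \<Rightarrow> (nat \<Rightarrow> nat \<Rightarrow> real) \<Rightarrow> nat \<Rightarrow> nat" where
  "sigmaA n s N x y A t = sigmaList n s N x y A ! (t - 1)"

definition phi :: "nat \<Rightarrow> nat \<Rightarrow> nat \<Rightarrow> (nat \<Rightarrow> nat \<Rightarrow> real) \<Rightarrow> (nat \<Rightarrow> real)
    \<Rightarrow> (nat \<Rightarrow> nat \<Rightarrow> real) \<Rightarrow> nat \<Rightarrow> real" where
  "phi n s N x y A t = y t - ip n x A t (sigmaA n s N x y A t)"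

definition delta :: "nat \<Rightarrow> nat \<Rightarrow> nat \<Rightarrow> (nat \<Rightarrow> nat \<Rightarrow> real) \<Rightarrow> (nat \<Rightarrow> real)
    \<Rightarrow> nat \<Rightarrow> (nat \<Rightarrow> nat \<Rightarrow> real) \<Rightarrow> real" where
  "delta n s N x y r A = Inf {(\<Sum>t\<in>{1..N}. \<bar>phi n s N x y A t - w t\<bar>) | w :: nat \<Rightarrow> real.
       card {t \<in> {1..N}. w t \<noteq> 0} \<le> r}"

definition xi :: "nat \<Rightarrow> nat \<Rightarrow> nat \<Rightarrow> (nat \<Rightarrow> nat \<Rightarrow> real) \<Rightarrow> (nat \<Rightarrow> real)
    \<Rightarrow> nat \<Rightarrow> real" where
  "xi n s N x y r = Sup {(\<Sum>t\<in>T. \<bar>phi n s N x y A t - phi n s N x y A' t\<bar>) /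
        (\<Sum>t\<in>{1..N}. \<bar>phi n s N x y A t - phi n s N x y A' t\<bar>) | A A' T.
        T \<subseteq> {1..N} \<and> card T \<le> r \<and> (\<exists>t\<in>{1..N}. phi n s N x y A t \<noteq> phi n s N x y A' t)}"

end

theory Submission
  imports Defs
begin

lemma sum_Un_le: "finite A \<Longrightarrow> finite B \<Longrightarrow> (\<And>x. f x \<ge> (0::real)) \<Longrightarrow>
   sum f (A \<union> B) \<le> sum f A + sum f B"
  by (simp add: sum_Un sum_nonneg)

lemma div_le1: "(a::real) \<le> b \<Longrightarrow> 0 \<le> b \<Longrightarrow> a / b \<le> 1"
  by (cases "b = 0") (simp_all add: divide_le_eq_1)

lemma key:
  fixes P Q w w' :: "nat \<Rightarrow> real" and c :: real
  assumes hT: "\<And>T. T \<subseteq> {1..N} \<Longrightarrow> card T \<le> r \<Longrightarrow>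
      (\<Sum>t\<in>T. \<bar>Q t - P t\<bar>) \<le> c * (\<Sum>t\<in>{1..N}. \<bar>Q t - P t\<bar>)"
    and hw: "card {t \<in> {1..N}. w t \<noteq> 0} \<le> r"
    and hw': "card {t \<in> {1..N}. w' t \<noteq> 0} \<le> r"
  shows "(\<Sum>t\<in>{1..N}. \<bar>Q t - P t\<bar>) * (1 - 2*c) \<le>
     (\<Sum>t\<in>{1..N}. \<bar>Q t - w' t\<bar>) + (\<Sum>t\<in>{1..N}. \<bar>P t - w t\<bar>)"
proof -
  define T1 where "T1 = {t \<in> {1..N}. w t \<noteq> 0}"
  define T2 where "T2 = {t \<in> {1..N}. w' t \<noteq> 0}"
  define D where "D = (\<Sum>t\<in>{1..N}. \<bar>Q t - P t\<bar>)"
  define R where "R = {1..N} - (T1 \<union> T2)"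
  have fin: "finite (T1 \<union> T2)" "finite R" unfolding T1_def T2_def R_def by auto
  have U: "{1..N} = (T1 \<union> T2) \<union> R" "(T1 \<union> T2) \<inter> R = {}"
    unfolding T1_def T2_def R_def by auto
  have "D = (\<Sum>t\<in>T1 \<union> T2. \<bar>Q t - P t\<bar>) + (\<Sum>t\<in>R. \<bar>Q t - P t\<bar>)"
    unfolding D_def using fin U by (metis sum.union_disjoint)
  moreover have "(\<Sum>t\<in>T1 \<union> T2. \<bar>Q t - P t\<bar>) \<le> (\<Sum>t\<in>T1. \<bar>Q t - P t\<bar>) + (\<Sum>t\<in>T2. \<bar>Q t - P t\<bar>)"
    by (rule sum_Un_le) (auto simp: T1_def T2_def)
  moreover have "(\<Sum>t\<in>T1. \<bar>Q t - P t\<bar>) \<le> c * D"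
    using hw unfolding T1_def D_def by (intro hT) auto
  moreover have "(\<Sum>t\<in>T2. \<bar>Q t - P t\<bar>) \<le> c * D"
    using hw' unfolding T2_def D_def by (intro hT) auto
  moreover have "(\<Sum>t\<in>R. \<bar>Q t - P t\<bar>) \<le> (\<Sum>t\<in>R. \<bar>Q t - w' t\<bar> + \<bar>P t - w t\<bar>)"
    by (rule sum_mono) (auto simp: R_def T1_def T2_def)
  moreover have "(\<Sum>t\<in>R. \<bar>Q t - w' t\<bar> + \<bar>P t - w t\<bar>) \<le> (\<Sum>t\<in>{1..N}. \<bar>Q t - w' t\<bar> + \<bar>P t - w t\<bar>)"
    by (rule sum_mono2) (auto simp: R_def)
  ultimately show ?thesis unfolding D_def[symmetric] by (simp add: sum.distrib algebra_simps)
qed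

theorem mainTheorem3:
  fixes n s N r :: nat and x :: "nat \<Rightarrow> nat \<Rightarrow> real" and y :: "nat \<Rightarrow> real"
    and A A' :: "nat \<Rightarrow> nat \<Rightarrow> real"
  assumes "n \<ge> 1" and "s \<ge> 1" and "N \<ge> 1" and "r \<le> N"
    and "xi n s N x y r < 1/2"
  shows "(\<Sum>t\<in>{1..N}. \<bar>phi n s N x y A' t - phi n s N x y A t\<bar>)
           \<le> 1 / (1 - 2 * xi n s N x y r) * (delta n s N x y r A' + delta n s N x y r A)"
proof -
  define P where "P = phi n s N x y A"
  define Q where "Q = phi n s N x y A'"
  define c where "c = xi n s N x y r"
  define D where "D = (\<Sum>t\<in>{1..N}. \<bar>Q t - P t\<bar>)"
  have cpos: "1 - 2*c > 0" using assms(5) unfolding c_def by simp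
  have hT: "(\<Sum>t\<in>T. \<bar>Q t - P t\<bar>) \<le> c * D" if T: "T \<subseteq> {1..N}" "card T \<le> r" for T
  proof (cases "D = 0")
    case True
    have "\<forall>t\<in>{1..N}. \<bar>Q t - P t\<bar> = 0" using True unfolding D_def
      by (subst sum_nonneg_eq_0_iff[symmetric]) auto
    then have "(\<Sum>t\<in>T. \<bar>Q t - P t\<bar>) = 0" using T by (intro sum.neutral) auto
    then show ?thesis using True by simp
  next
    case False
    have Dpos: "D > 0" using False unfolding D_def by (simp add: order_le_neq_trans sum_nonneg)
    have "\<exists>t\<in>{1..N}. Q t \<noteq> P t"
    proof (rule ccontr)
      assume "\<not> ?thesis"
      then have "D = 0" unfolding D_def by (intro sum.neutral) auto
      then show False using False by simp
    qed
    then obtain t where t: "t \<in> {1..N}" "Q t \<noteq> P t" by blast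
    let ?S = "{(\<Sum>t\<in>T. \<bar>phi n s N x y A t - phi n s N x y A' t\<bar>) /
        (\<Sum>t\<in>{1..N}. \<bar>phi n s N x y A t - phi n s N x y A' t\<bar>) | A A' T.
        T \<subseteq> {1..N} \<and> card T \<le> r \<and> (\<exists>t\<in>{1..N}. phi n s N x y A t \<noteq> phi n s N x y A' t)}"
    have mem: "(\<Sum>t\<in>T. \<bar>Q t - P t\<bar>) / D \<in> ?S"
    proof -
      have e: "(\<Sum>t\<in>T. \<bar>Q t - P t\<bar>) / D = (\<Sum>t\<in>T. \<bar>phi n s N x y A t - phi n s N x y A' t\<bar>) /
        (\<Sum>t\<in>{1..N}. \<bar>phi n s N x y A t - phi n s N x y A' t\<bar>)"
        unfolding D_def P_def Q_def by (simp add: abs_minus_commute)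
      have "\<exists>t\<in>{1..N}. phi n s N x y A t \<noteq> phi n s N x y A' t" using t unfolding P_def Q_def by (intro bexI[of _ t]) auto
      then show ?thesis unfolding e
        apply (rule_tac CollectI)
        apply (rule exI[of _ A], rule exI[of _ A'], rule exI[of _ T])
        using T by simp
    qed
    have bdd: "bdd_above ?S"
    proof (rule bdd_aboveI[of _ 1])
      fix z assume "z \<in> ?S"
      then obtain B B' U where z: "z = (\<Sum>t\<in>U. \<bar>phi n s N x y B t - phi n s N x y B' t\<bar>) /
        (\<Sum>t\<in>{1..N}. \<bar>phi n s N x y B t - phi n s N x y B' t\<bar>)" and U: "U \<subseteq> {1..N}"
        by blast
      have "(\<Sum>t\<in>U. \<bar>phi n s N x y B t - phi n s N x y B' t\<bar>) \<le>
        (\<Sum>t\<in>{1..N}. \<bar>phi n s N x y B t - phi n s N x y B' t\<bar>)"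
        using U by (intro sum_mono2) auto
      moreover have "(\<Sum>t\<in>{1..N}. \<bar>phi n s N x y B t - phi n s N x y B' t\<bar>) \<ge> 0"
        by (rule sum_nonneg) auto
      ultimately show "z \<le> 1" unfolding z by (rule div_le1)
    qed
    have "(\<Sum>t\<in>T. \<bar>Q t - P t\<bar>) / D \<le> c"
      unfolding c_def xi_def by (rule cSup_upper[OF mem bdd])
    then show ?thesis using Dpos by (simp add: pos_divide_le_eq mult.commute)
  qed
  have main: "D * (1 - 2*c) \<le> (\<Sum>t\<in>{1..N}. \<bar>Q t - w' t\<bar>) + (\<Sum>t\<in>{1..N}. \<bar>P t - w t\<bar>)"
    if "card {t \<in> {1..N}. w t \<noteq> 0} \<le> r" "card {t \<in> {1..N}. w' t \<noteq> 0} \<le> r" for w w'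
    unfolding D_def by (rule key[OF hT[unfolded D_def] that])
  have zero: "card {t \<in> {1..N}. (\<lambda>_. 0::real) t \<noteq> 0} \<le> r" by simp
  have dA: "D * (1 - 2*c) - (\<Sum>t\<in>{1..N}. \<bar>Q t - w' t\<bar>) \<le> delta n s N x y r A"
    if w': "card {t \<in> {1..N}. w' t \<noteq> 0} \<le> r" for w'
    unfolding delta_def P_def[symmetric]
  proof (rule cInf_greatest)
    show "{\<Sum>t\<in>{1..N}. \<bar>P t - w t\<bar> |w. card {t \<in> {1..N}. w t \<noteq> 0} \<le> r} \<noteq> {}"
    proof -
      have "(\<Sum>t\<in>{1..N}. \<bar>P t - (\<lambda>_. 0) t\<bar>) \<in> {\<Sum>t\<in>{1..N}. \<bar>P t - w t\<bar> |w. card {t \<in> {1..N}. w t \<noteq> 0} \<le> r}"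
        unfolding mem_Collect_eq by (rule exI[of _ "\<lambda>_. 0"]) simp
      then show ?thesis by blast
    qed
    fix z assume "z \<in> {\<Sum>t\<in>{1..N}. \<bar>P t - w t\<bar> |w. card {t \<in> {1..N}. w t \<noteq> 0} \<le> r}"
    then obtain w where "z = (\<Sum>t\<in>{1..N}. \<bar>P t - w t\<bar>)" "card {t \<in> {1..N}. w t \<noteq> 0} \<le> r"
      by blast
    then show "D * (1 - 2*c) - (\<Sum>t\<in>{1..N}. \<bar>Q t - w' t\<bar>) \<le> z"
      using main[of w w'] w' by linarith
  qed
  have dA': "D * (1 - 2*c) - delta n s N x y r A \<le> delta n s N x y r A'"
    unfolding delta_def[of _ _ _ _ _ _ A'] Q_def[symmetric]
  proof (rule cInf_greatest)
    show "{\<Sum>t\<in>{1..N}. \<bar>Q t - w t\<bar> |w. card {t \<in> {1..N}. w t \<noteq> 0} \<le> r} \<noteq> {}"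
    proof -
      have "(\<Sum>t\<in>{1..N}. \<bar>Q t - (\<lambda>_. 0) t\<bar>) \<in> {\<Sum>t\<in>{1..N}. \<bar>Q t - w t\<bar> |w. card {t \<in> {1..N}. w t \<noteq> 0} \<le> r}"
        unfolding mem_Collect_eq by (rule exI[of _ "\<lambda>_. 0"]) simp
      then show ?thesis by blast
    qed
    fix z assume "z \<in> {\<Sum>t\<in>{1..N}. \<bar>Q t - w t\<bar> |w. card {t \<in> {1..N}. w t \<noteq> 0} \<le> r}"
    then obtain w where "z = (\<Sum>t\<in>{1..N}. \<bar>Q t - w t\<bar>)" "card {t \<in> {1..N}. w t \<noteq> 0} \<le> r"
      by blast
    then show "D * (1 - 2*c) - delta n s N x y r A \<le> z"
      using dA[of w] by linarith
  qed
  have "D * (1 - 2*c) \<le> delta n s N x y r A' + delta n s N x y r A" using dA' by simp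
  then have "D \<le> (delta n s N x y r A' + delta n s N x y r A) / (1 - 2*c)"
    using cpos by (simp add: pos_le_divide_eq)
  then show ?thesis unfolding D_def P_def Q_def c_def by (simp only: divide_inverse mult.commute[of "inverse _"] mult_1_left)
qed

end
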